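(* Let $(T_i,x_i)_{i=1}^\infty$ be a sequence of trees, each with a chosen base vertex $x_i$. Then the restricted product $\times_{i=1}^\infty T_i$ has asymptotic property C.
   Context: A tree is a connected acyclic graph, regarded as a metric space on its vertex set with the shortest path metric. Given a sequence of pointed metric spaces $(X_i,x_i)_{i\ge1}$, the restricted product $\times_{i=1}^\infty X_i$ is the set of sequences $(a_i)_{i\ge1}$ with $a_i\in X_i$ for all $i$ and $a_i=x_i$ for all but finitely many $i$, equipped with the metric $d((a_i),(b_i))=\sum_{i=1}^\infty i\cdot d(a_i,b_i)$. For $R>0$, a family $\mathcal U$ of nonempty subsets of a metric space is $R$-disjoint if $d(A,B)>R$ for all distinct $A,B\in\mathcal U$, where $d(A,B)=\inf\{d(a,b):a\in A,b\in B\}$; it is uniformly bounded if $\sup\{\operatorname{diam}U:U\in\mathcal U\}<\infty$. A metric space $X$ has asymptotic property C if for every sequence $R_0\le R_1\le R_2\le\cdots$ of positive reals there exist $n\ge0$ and uniformly bounded $R_i$-disjoint families $\mathcal U_i$ ($i=0,\dots,n$) of subsets of $X$ such that $\bigcup_{i=0}^n\mathcal U_i$ covers $X$. *)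

theory Defs
  imports "HOL-Analysis.Analysis"
begin

definition simple_graph :: "'a set \<Rightarrow> ('a \<Rightarrow> 'a \<Rightarrow> bool) \<Rightarrow> bool" where
  "simple_graph V E \<longleftrightarrow> (\<forall>u v. E u v \<longrightarrow> u \<in> V \<and> v \<in> V \<and> E v u \<and> u \<noteq> v)"

definition walk :: "'a set \<Rightarrow> ('a \<Rightarrow> 'a \<Rightarrow> bool) \<Rightarrow> 'a list \<Rightarrow> bool" where
  "walk V E p \<longleftrightarrow> p \<noteq> [] \<and> set p \<subseteq> V \<and> (\<forall>k. Suc k < length p \<longrightarrow> E (p ! k) (p ! Suc k))"

definition graph_connected :: "'a set \<Rightarrow> ('a \<Rightarrow> 'a \<Rightarrow> bool) \<Rightarrow> bool" where
  "graph_connected V E \<longleftrightarrow>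
     (\<forall>u\<in>V. \<forall>v\<in>V. \<exists>p. walk V E p \<and> hd p = u \<and> last p = v)"

text \<open>A cycle: closed walk v0,...,vn=v0 with n \<ge> 3 and v1,...,vn distinct.\<close>
definition graph_acyclic :: "'a set \<Rightarrow> ('a \<Rightarrow> 'a \<Rightarrow> bool) \<Rightarrow> bool" where
  "graph_acyclic V E \<longleftrightarrow>
     \<not> (\<exists>p. walk V E p \<and> length p \<ge> 4 \<and> hd p = last p \<and> distinct (tl p))"

definition is_tree :: "'a set \<Rightarrow> ('a \<Rightarrow> 'a \<Rightarrow> bool) \<Rightarrow> bool" where
  "is_tree V E \<longleftrightarrow> simple_graph V E \<and> graph_connected V E \<and> graph_acyclic V E"

definition graph_dist :: "'a set \<Rightarrow> ('a \<Rightarrow> 'a \<Rightarrow> bool) \<Rightarrow> 'a \<Rightarrow> 'a \<Rightarrow> nat" where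
  "graph_dist V E u v =
     (LEAST n. \<exists>p. walk V E p \<and> hd p = u \<and> last p = v \<and> length p = Suc n)"

text \<open>Restricted product of pointed spaces; factors indexed by 0,1,2,...
  (factor k here is factor k+1 of the paper), so the weight is Suc k.\<close>
definition restricted_product :: "(nat \<Rightarrow> 'a set) \<Rightarrow> (nat \<Rightarrow> 'a) \<Rightarrow> (nat \<Rightarrow> 'a) set" where
  "restricted_product V x =
     {a. (\<forall>i. a i \<in> V i) \<and> finite {i. a i \<noteq> x i}}"

definition restricted_product_dist ::
  "(nat \<Rightarrow> 'a set) \<Rightarrow> (nat \<Rightarrow> 'a \<Rightarrow> 'a \<Rightarrow> bool) \<Rightarrow> (nat \<Rightarrow> 'a) \<Rightarrow> (nat \<Rightarrow> 'a) \<Rightarrow> real" where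
  "restricted_product_dist V E a b =
     (\<Sum>i. real (Suc i) * real (graph_dist (V i) (E i) (a i) (b i)))"

definition set_distance :: "('b \<Rightarrow> 'b \<Rightarrow> real) \<Rightarrow> 'b set \<Rightarrow> 'b set \<Rightarrow> real" where
  "set_distance d A B = (INF p \<in> A \<times> B. d (fst p) (snd p))"

definition R_disjoint :: "('b \<Rightarrow> 'b \<Rightarrow> real) \<Rightarrow> real \<Rightarrow> 'b set set \<Rightarrow> bool" where
  "R_disjoint d R \<U> \<longleftrightarrow> (\<forall>A\<in>\<U>. \<forall>B\<in>\<U>. A \<noteq> B \<longrightarrow> set_distance d A B > R)"

definition uniformly_bounded :: "('b \<Rightarrow> 'b \<Rightarrow> real) \<Rightarrow> 'b set set \<Rightarrow> bool" where
  "uniformly_bounded d \<U> \<longleftrightarrow> (\<exists>M. \<forall>U\<in>\<U>. \<forall>a\<in>U. \<forall>b\<in>U. d a b \<le> M)"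

definition asymptotic_property_C :: "'b set \<Rightarrow> ('b \<Rightarrow> 'b \<Rightarrow> real) \<Rightarrow> bool" where
  "asymptotic_property_C X d \<longleftrightarrow>
     (\<forall>R :: nat \<Rightarrow> real. (\<forall>i. R i > 0) \<and> mono R \<longrightarrow>
        (\<exists>n \<U>. (\<forall>i\<le>n. (\<forall>A\<in>\<U> i. A \<noteq> {} \<and> A \<subseteq> X)
                      \<and> uniformly_bounded d (\<U> i) \<and> R_disjoint d (R i) (\<U> i))
              \<and> X \<subseteq> (\<Union>i\<le>n. \<Union>(\<U> i))))"

end

theory Submission
  imports Defs "HOL-Library.Nat_Bijection"
begin


lemma walk_single: "u \<in> V \<Longrightarrow> walk V E [u]"
  by (simp add: walk_def)

lemma walk_append:
  assumes "walk V E p" "walk V E q" "last p = hd q"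
  shows "walk V E (p @ tl q)"
proof -
  have pq: "p \<noteq> []" "q \<noteq> []" using assms by (auto simp: walk_def)
  have "set (p @ tl q) \<subseteq> V" using assms pq by (auto simp: walk_def dest: list.set_sel(2))
  moreover have "E ((p @ tl q) ! k) ((p @ tl q) ! Suc k)" if k: "Suc k < length (p @ tl q)" for k
  proof (cases "Suc k < length p")
    case True then show ?thesis using assms(1) by (simp add: walk_def nth_append)
  next
    case False
    show ?thesis
    proof (cases "k < length p")
      case True
      then have "k = length p - 1" using False by simp
      then have "(p @ tl q) ! k = q ! 0" using pq assms(3) by (simp add: nth_append last_conv_nth hd_conv_nth)
      moreover have "(p @ tl q) ! Suc k = q ! 1" using pq \<open>k = length p - 1\<close> k
        by (simp add: nth_append nth_tl)
      moreover have "1 < length q" using k \<open>k = length p - 1\<close> pq by simp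
      ultimately show ?thesis using assms(2) by (simp add: walk_def)
    next
      case False
      have b: "Suc (Suc (k - length p)) < length q" using k False pq by simp
      then have "(p @ tl q) ! k = q ! (Suc (k - length p))" "(p @ tl q) ! Suc k = q ! Suc (Suc (k - length p))"
        using pq False by (auto simp: nth_append nth_tl Suc_diff_le)
      moreover note b
      ultimately show ?thesis using assms(2) by (simp add: walk_def)
    qed
  qed
  ultimately show ?thesis using pq by (simp add: walk_def)
qed

lemma walk_take: "walk V E p \<Longrightarrow> 0 < k \<Longrightarrow> walk V E (take k p)"
  by (auto simp: walk_def dest: in_set_takeD)

lemma walk_drop: "walk V E p \<Longrightarrow> k < length p \<Longrightarrow> walk V E (drop k p)"
  by (auto simp: walk_def dest: in_set_dropD)

lemma walk_rev: "simple_graph V E \<Longrightarrow> walk V E p \<Longrightarrow> walk V E (rev p)"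
  unfolding walk_def simple_graph_def
  apply (auto simp: rev_nth)
  subgoal for k
    apply (drule spec[of _ "length p - Suc (Suc k)"])
    apply (subgoal_tac "Suc (length p - Suc (Suc k)) = length p - Suc k")
     apply auto
    done
  done

lemma last_take_Suc: "k < length p \<Longrightarrow> last (take (Suc k) p) = p ! k"
  by (simp add: take_Suc_conv_app_nth)

lemma walk_hd_in: "walk V E p \<Longrightarrow> hd p \<in> V"
  by (auto simp: walk_def)
lemma walk_last_in: "walk V E p \<Longrightarrow> last p \<in> V"
  by (auto simp: walk_def)

locale tree_loc =
  fixes V :: "'a set" and E :: "'a \<Rightarrow> 'a \<Rightarrow> bool" and x :: 'a
  assumes tree: "is_tree V E" and root: "x \<in> V"
begin

abbreviation dist where "dist \<equiv> graph_dist V E"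

lemma simple: "simple_graph V E" using tree by (simp add: is_tree_def)
lemma conn: "graph_connected V E" using tree by (simp add: is_tree_def)
lemma acyc: "graph_acyclic V E" using tree by (simp add: is_tree_def)

lemma E_in: "E u v \<Longrightarrow> u \<in> V \<and> v \<in> V \<and> E v u \<and> u \<noteq> v"
  using simple by (simp add: simple_graph_def)

lemma dist_le: "walk V E p \<Longrightarrow> dist (hd p) (last p) \<le> length p - 1"
  unfolding graph_dist_def
  apply (rule Least_le)
  apply (rule exI[of _ p])
  apply (cases p) apply (auto simp: walk_def)
  done

lemma dist_ex: assumes "u \<in> V" "v \<in> V"
  shows "\<exists>p. walk V E p \<and> hd p = u \<and> last p = v \<and> length p = Suc (dist u v)"
proof -
  obtain p where p: "walk V E p" "hd p = u" "last p = v" using conn assms by (auto simp: graph_connected_def)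
  then have "\<exists>n p. walk V E p \<and> hd p = u \<and> last p = v \<and> length p = Suc n"
    by (intro exI[of _ "length p - 1"] exI[of _ p]) (auto simp: walk_def)
  then show ?thesis unfolding graph_dist_def by (rule LeastI_ex)
qed

lemma dist_refl: "u \<in> V \<Longrightarrow> dist u u = 0"
  using dist_le[OF walk_single[of u V E]] by simp

lemma dist_sym: assumes "u \<in> V" "v \<in> V" shows "dist u v = dist v u"
proof -
  have "dist v u \<le> dist u v" if uv: "u \<in> V" "v \<in> V" for u v
  proof -
    obtain p where p: "walk V E p" "hd p = u" "last p = v" "length p = Suc (dist u v)"
      using dist_ex[OF uv] by blast
    have "p \<noteq> []" using p by (auto simp: walk_def)
    then show ?thesis using dist_le[OF walk_rev[OF simple p(1)]] p by (simp add: hd_rev last_rev)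
  qed
  then show ?thesis using assms by (simp add: le_antisym)
qed

lemma dist_triangle: assumes "u \<in> V" "v \<in> V" "w \<in> V"
  shows "dist u w \<le> dist u v + dist v w"
proof -
  obtain p where p: "walk V E p" "hd p = u" "last p = v" "length p = Suc (dist u v)"
    using dist_ex assms by blast
  obtain q where q: "walk V E q" "hd q = v" "last q = w" "length q = Suc (dist v w)"
    using dist_ex assms by blast
  have w: "walk V E (p @ tl q)" using walk_append[OF p(1) q(1)] p q by simp
  have ne: "p \<noteq> []" "q \<noteq> []" using p q by (auto simp: walk_def)
  have "hd (p @ tl q) = u" using ne p by simp
  moreover have "last (p @ tl q) = w" using ne p q
    by (cases "tl q = []") (auto simp: last_tl, metis last_ConsL list.collapse)
  ultimately show ?thesis using dist_le[OF w] p q by simp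
qed

lemma dist_edge: "E u v \<Longrightarrow> dist u v \<le> 1"
  using dist_le[of "[u,v]"] E_in[of u v] by (simp add: walk_def less_Suc_eq)

lemma dist_0: assumes "u \<in> V" "v \<in> V" "dist u v = 0" shows "u = v"
proof -
  obtain p where p: "walk V E p" "hd p = u" "last p = v" "length p = Suc 0"
    using dist_ex assms by fastforce
  then show ?thesis by (cases p) auto
qed

abbreviation r where "r v \<equiv> dist x v"

lemma geo_pos:
  assumes p: "walk V E p" "hd p = x" "last p = v" "length p = Suc (r v)" and k: "k < length p"
  shows "r (p ! k) = k"
proof -
  have ne: "p \<noteq> []" using p by (auto simp: walk_def)
  have pk: "p ! k \<in> V" using p k by (auto simp: walk_def)
  have v: "v \<in> V" using p walk_last_in by blast
  have t1: "hd (take (Suc k) p) = x" using p ne by simp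
  have t2: "last (take (Suc k) p) = p ! k" using k by (simp add: last_take_Suc)
  have t3: "length (take (Suc k) p) = Suc k" using k by simp
  have "r (p ! k) \<le> k"
    using dist_le[OF walk_take[OF p(1), of "Suc k"]] t1 t2 t3 by simp
  moreover have "dist (p ! k) v \<le> length p - 1 - k"
    using dist_le[OF walk_drop[OF p(1) k]] p ne k by (simp add: hd_drop_conv_nth last_drop)
  moreover have "r v \<le> r (p ! k) + dist (p ! k) v" using dist_triangle[OF root pk v] .
  ultimately show ?thesis using p(4) k by arith
qed

lemma distinct_walk:
  assumes "walk V E p" "hd p = a" "last p = b"
  shows "\<exists>q. walk V E q \<and> hd q = a \<and> last q = b \<and> distinct q \<and> set q \<subseteq> set p"
  using assms
proof (induction "length p" arbitrary: p rule: less_induct)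
  case less
  show ?case
  proof (cases "distinct p")
    case True then show ?thesis using less.prems by blast
  next
    case False
    then obtain i0 j0 where ij0: "i0 < length p" "j0 < length p" "i0 \<noteq> j0" "p ! i0 = p ! j0"
      by (auto simp: distinct_conv_nth)
    define i where "i = min i0 j0"
    define j where "j = max i0 j0"
    have ij: "i < j" "j < length p" "p ! i = p ! j" using ij0 unfolding i_def j_def
      by (auto simp: min_def max_def)
    define q where "q = take (Suc i) p @ tl (drop j p)"
    have ne: "p \<noteq> []" using ij by auto
    have w: "walk V E q" unfolding q_def
      apply (rule walk_append)
      using walk_take[OF less.prems(1), of "Suc i"] walk_drop[OF less.prems(1) ij(2)] ij
      by (auto simp: last_take_Suc hd_drop_conv_nth)
    have tld: "tl (drop j p) = drop (Suc j) p" by (simp add: drop_Suc tl_drop)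
    have hq: "hd q = a" using less.prems ne by (simp add: q_def)
    have lq: "last q = b"
    proof (cases "Suc j < length p")
      case True then show ?thesis using less.prems by (simp add: q_def tld)
    next
      case False
      then have "Suc j = length p" using ij by simp
      then have "q = take (Suc i) p" by (simp add: q_def tld)
      then show ?thesis using less.prems ij ne sym[OF \<open>Suc j = length p\<close>]
        by (simp add: last_take_Suc last_conv_nth)
    qed
    have len: "length q < length p" using ij by (simp add: q_def)
    have sq: "set q \<subseteq> set p" unfolding q_def using tld
      by (auto dest: in_set_takeD in_set_dropD)
    from less.hyps[OF len w hq lq] sq show ?thesis by blast
  qed
qed

lemma unique_down:
  assumes v: "v \<in> V" and e: "E v w1" "E v w2" and rw: "r w1 \<le> r v" "r w2 \<le> r v"
  shows "w1 = w2"
proof (rule ccontr)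
  assume ne: "w1 \<noteq> w2"
  have avoid: "\<exists>g. walk V E g \<and> hd g = x \<and> last g = w \<and> v \<notin> set g"
    if ew: "E v w" and rw: "r w \<le> r v" for w
  proof -
    have w: "w \<in> V" using E_in[OF ew] by simp
    obtain g where g: "walk V E g" "hd g = x" "last g = w" "length g = Suc (r w)"
      using dist_ex[OF root w] by blast
    have "v \<notin> set g"
    proof
      assume "v \<in> set g"
      then obtain k where k: "k < length g" "g ! k = v" by (auto simp: in_set_conv_nth)
      have "r v = k" using geo_pos[OF g k(1)] k by simp
      then have "k = length g - 1" using k g rw by simp
      moreover have "g \<noteq> []" using g by (auto simp: walk_def)
      ultimately have "v = w" using k g by (simp add: last_conv_nth)
      then show False using E_in[OF ew] by simp
    qed
    then show ?thesis using g by blast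
  qed
  obtain g1 where g1: "walk V E g1" "hd g1 = x" "last g1 = w1" "v \<notin> set g1" using avoid e rw by blast
  obtain g2 where g2: "walk V E g2" "hd g2 = x" "last g2 = w2" "v \<notin> set g2" using avoid e rw by blast
  have n1: "g1 \<noteq> []" "g2 \<noteq> []" using g1 g2 by (auto simp: walk_def)
  have wk: "walk V E (rev g1 @ tl g2)"
    by (rule walk_append[OF walk_rev[OF simple g1(1)] g2(1)]) (use g1 g2 n1 in \<open>simp add: last_rev\<close>)
  have h: "hd (rev g1 @ tl g2) = w1" using g1 n1 by (simp add: hd_rev)
  have l: "last (rev g1 @ tl g2) = w2"
  proof (cases "tl g2 = []")
    case True
    then have "g2 = [x]" using n1 g2 by (cases g2) auto
    then show ?thesis using True g1 g2 n1 by (simp add: last_rev)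
  next
    case False then show ?thesis using g2 n1 by (simp add: last_tl)
  qed
  have nv: "v \<notin> set (rev g1 @ tl g2)" using g1 g2 n1 by (auto dest: list.set_sel(2))
  obtain P where P: "walk V E P" "hd P = w1" "last P = w2" "distinct P" "v \<notin> set P"
    using distinct_walk[OF wk h l] nv by blast
  have nP: "P \<noteq> []" using P by (auto simp: walk_def)
  have lenP: "length P \<ge> 2"
  proof (rule ccontr)
    assume "\<not> 2 \<le> length P"
    moreover have "length P \<noteq> 0" using nP by simp
    ultimately have "length P = 1" by linarith
    then show False using P ne by (cases P) auto
  qed
  have w1v: "walk V E [v, w1]" using E_in[OF e(1)] e(1) by (simp add: walk_def less_Suc_eq)
  have w2v: "walk V E [w2, v]" using E_in[OF e(2)] by (simp add: walk_def less_Suc_eq)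
  have c1: "walk V E (v # P)"
    using walk_append[OF w1v P(1)] P nP by (cases P) auto
  have c2: "walk V E ((v # P) @ [v])"
    using walk_append[OF c1 w2v] P nP by simp
  have "\<exists>p. walk V E p \<and> length p \<ge> 4 \<and> hd p = last p \<and> distinct (tl p)"
    by (rule exI[of _ "(v # P) @ [v]"]) (use c2 lenP P in auto)
  then show False using acyc by (simp add: graph_acyclic_def)
qed

definition par where "par v = (SOME w. E v w \<and> Suc (r w) = r v)"

lemma par_ex: assumes v: "v \<in> V" "v \<noteq> x" shows "\<exists>w. E v w \<and> Suc (r w) = r v"
proof -
  obtain p where p: "walk V E p" "hd p = x" "last p = v" "length p = Suc (r v)"
    using dist_ex[OF root v(1)] by blast
  have r0: "r v \<noteq> 0" using dist_0[OF root v(1)] v by auto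
  define w where "w = p ! (r v - 1)"
  have "r w = r v - 1" using geo_pos[OF p, of "r v - 1"] p by (simp add: w_def)
  moreover have "E w v"
  proof -
    have "Suc (r v - 1) < length p" using p r0 by simp
    then have "E (p ! (r v - 1)) (p ! Suc (r v - 1))" using p(1) by (simp add: walk_def)
    moreover have "p ! Suc (r v - 1) = v" using p r0
      by (metis Suc_pred' last_conv_nth diff_Suc_1 list.size(3) nat.distinct(1) neq0_conv)
    ultimately show ?thesis by (simp add: w_def)
  qed
  ultimately show ?thesis using E_in r0 by (intro exI[of _ w]) auto
qed

lemma par: assumes "v \<in> V" "v \<noteq> x" shows "E v (par v)" "Suc (r (par v)) = r v"
  using someI_ex[OF par_ex[OF assms]] unfolding par_def by auto

lemma par_in: assumes "v \<in> V" "v \<noteq> x" shows "par v \<in> V"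
  using par[OF assms] E_in by blast

lemma edge_r: assumes e: "E u v" and lt: "r u \<le> r v"
  shows "r v = Suc (r u) \<and> par v = u"
proof -
  have uv: "u \<in> V" "v \<in> V" "E v u" "u \<noteq> v" using E_in[OF e] by auto
  have vx: "v \<noteq> x"
  proof
    assume "v = x"
    then have "r u = 0" using lt dist_refl root by simp
    then have "u = x" using dist_0[OF root uv(1)] by simp
    then show False using uv \<open>v = x\<close> by simp
  qed
  have pu: "par v = u" using unique_down[OF uv(2) par(1)[OF uv(2) vx] uv(3)] par(2)[OF uv(2) vx] lt by simp
  then show ?thesis using par(2)[OF uv(2) vx] by simp
qed

lemma r_lip: assumes "u \<in> V" "v \<in> V" shows "r u \<le> r v + dist u v" "r v \<le> r u + dist u v"
  using dist_triangle[OF root assms(2) assms(1)] dist_triangle[OF root assms(1) assms(2)]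
    dist_sym[OF assms] by auto

lemma par_iter: assumes v: "v \<in> V" shows "j \<le> r v \<Longrightarrow>
  (par ^^ j) v \<in> V \<and> r ((par ^^ j) v) = r v - j \<and> dist v ((par ^^ j) v) \<le> j"
proof (induction j)
  case 0 then show ?case using v dist_refl by simp
next
  case (Suc j)
  let ?w = "(par ^^ j) v"
  have w: "?w \<in> V" "r ?w = r v - j" "dist v ?w \<le> j" using Suc by auto
  have wx: "?w \<noteq> x" using w Suc.prems dist_refl[OF root] by auto
  have pw: "E ?w (par ?w)" "Suc (r (par ?w)) = r ?w" using par[OF w(1) wx] by auto
  have pin: "par ?w \<in> V" using par_in[OF w(1) wx] .
  have "dist v (par ?w) \<le> dist v ?w + dist ?w (par ?w)" using dist_triangle[OF v w(1) pin] .
  also have "\<dots> \<le> Suc j" using w(3) dist_edge[OF pw(1)] by simp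
  finally show ?case using pin pw w by simp
qed

definition anc where "anc v l = (par ^^ (r v - l)) v"

lemma anc_props: assumes "v \<in> V" "l \<le> r v"
  shows "anc v l \<in> V" "r (anc v l) = l" "dist v (anc v l) \<le> r v - l"
  using par_iter[OF assms(1), of "r v - l"] assms unfolding anc_def by auto

lemma anc_self: "anc v (r v) = v" by (simp add: anc_def)

lemma anc_0: assumes "v \<in> V" shows "anc v 0 = x"
  using anc_props[OF assms, of 0] dist_0[OF root, of "anc v 0"] by simp

lemma anc_same: assumes uv: "u \<in> V" "v \<in> V" and l: "l \<le> r u" "l \<le> r v" and eq: "anc u l = anc v l"
  shows "dist u v + 2 * l \<le> r u + r v"
proof -
  have a: "anc u l \<in> V" "dist u (anc u l) \<le> r u - l" using anc_props[OF uv(1) l(1)] by auto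
  have b: "dist v (anc v l) \<le> r v - l" using anc_props[OF uv(2) l(2)] by auto
  have "dist u v \<le> dist u (anc u l) + dist (anc u l) v" using dist_triangle[OF uv(1) a(1) uv(2)] .
  also have "dist (anc u l) v = dist v (anc v l)" using dist_sym[OF a(1) uv(2)] eq by simp
  finally show ?thesis using a b l by linarith
qed

lemma anc_edge: assumes e: "E u v" and l: "l \<le> r u" "l \<le> r v" shows "anc u l = anc v l"
proof -
  have main: "anc u l = anc v l" if e: "E u v" and l: "l \<le> r u" "l \<le> r v" and le: "r u \<le> r v" for u v
  proof -
    have rv: "r v = Suc (r u)" "par v = u" using edge_r[OF e le] by auto
    have "anc v l = (par ^^ Suc (r u - l)) v" unfolding anc_def using rv l by (simp add: Suc_diff_le)
    also have "\<dots> = (par ^^ (r u - l)) (par v)" by (simp add: funpow_Suc_right del: funpow.simps)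
    finally show ?thesis using rv by (simp add: anc_def)
  qed
  show ?thesis
  proof (cases "r u \<le> r v")
    case True then show ?thesis using main e l by blast
  next
    case False then show ?thesis using main[of v u] E_in[OF e] l by fastforce
  qed
qed

lemma anc_walk: assumes p: "walk V E p" and l: "\<forall>k<length p. l \<le> r (p ! k)"
  shows "k < length p \<Longrightarrow> anc (p ! k) l = anc (p ! 0) l"
proof (induction k)
  case 0 then show ?case by simp
next
  case (Suc k)
  have "E (p ! k) (p ! Suc k)" using p Suc.prems by (simp add: walk_def)
  then show ?case using anc_edge[of "p ! k" "p ! Suc k" l] Suc l by simp
qed

lemma anc_sep: assumes uv: "u \<in> V" "v \<in> V" and l: "l \<le> r u" "l \<le> r v" and ne: "anc u l \<noteq> anc v l"
  shows "r u + r v + 2 \<le> dist u v + 2 * l"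
proof -
  obtain p where p: "walk V E p" "hd p = u" "last p = v" "length p = Suc (dist u v)"
    using dist_ex[OF uv] by blast
  have pne: "p \<noteq> []" using p by auto
  have "\<exists>k<length p. r (p ! k) < l"
  proof (rule ccontr)
    assume "\<not> ?thesis"
    then have "\<forall>k<length p. l \<le> r (p ! k)" by auto
    from anc_walk[OF p(1) this, of "length p - 1"] p pne have "anc v l = anc u l"
      by (simp add: last_conv_nth hd_conv_nth)
    then show False using ne by simp
  qed
  then obtain k where k: "k < length p" "r (p ! k) < l" by blast
  have pk: "p ! k \<in> V" using p k by (auto simp: walk_def)
  have t1: "hd (take (Suc k) p) = u" using p pne by simp
  have t2: "last (take (Suc k) p) = p ! k" using k by (simp add: last_take_Suc)
  have d1: "dist u (p ! k) \<le> k"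
    using dist_le[OF walk_take[OF p(1), of "Suc k"]] t1 t2 k by simp
  have d2: "dist (p ! k) v \<le> length p - 1 - k"
    using dist_le[OF walk_drop[OF p(1) k(1)]] p pne k by (simp add: hd_drop_conv_nth last_drop)
  have "r u \<le> r (p ! k) + dist u (p ! k)" using r_lip[OF uv(1) pk] by simp
  moreover have "r v \<le> r (p ! k) + dist (p ! k) v" using r_lip[OF pk uv(2)] by simp
  ultimately show ?thesis using d1 d2 k p(4) by arith
qed

end



locale prod_loc =
  fixes V :: "nat \<Rightarrow> 'a set" and E :: "nat \<Rightarrow> 'a \<Rightarrow> 'a \<Rightarrow> bool" and x :: "nat \<Rightarrow> 'a"
  assumes trees: "\<And>i. is_tree (V i) (E i)" and roots: "\<And>i. x i \<in> V i"
begin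

abbreviation X where "X \<equiv> restricted_product V x"
abbreviation dd where "dd \<equiv> restricted_product_dist V E"
abbreviation gd where "gd i \<equiv> graph_dist (V i) (E i)"
abbreviation rr where "rr i v \<equiv> graph_dist (V i) (E i) (x i) v"
abbreviation an where "an i \<equiv> tree_loc.anc (V i) (E i) (x i)"

lemma TL: "tree_loc (V i) (E i) (x i)"
  using trees roots by (simp add: tree_loc_def)

lemma X_in: "a \<in> X \<Longrightarrow> a i \<in> V i" by (simp add: restricted_product_def)

lemma gd_same: "a \<in> X \<Longrightarrow> gd i (a i) (a i) = 0"
  using tree_loc.dist_refl[OF TL] X_in by blast

lemma dd_sums: assumes a: "a \<in> X" and b: "b \<in> X"
  and fin: "finite S" and out: "\<And>i. i \<notin> S \<Longrightarrow> a i = b i"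
  shows "(\<lambda>i. real (Suc i) * real (gd i (a i) (b i))) sums (\<Sum>i\<in>S. real (Suc i) * real (gd i (a i) (b i)))"
  by (rule sums_finite[OF fin]) (use out gd_same[OF a] gd_same[OF b] in simp)

lemma dd_sums': assumes a: "a \<in> X" and b: "b \<in> X"
  shows "\<exists>S. finite S \<and> (\<lambda>i. real (Suc i) * real (gd i (a i) (b i))) sums (\<Sum>i\<in>S. real (Suc i) * real (gd i (a i) (b i)))"
proof -
  let ?S = "{i. a i \<noteq> x i} \<union> {i. b i \<noteq> x i}"
  have f1: "finite {i. a i \<noteq> x i}" using a by (simp add: restricted_product_def)
  have f2: "finite {i. b i \<noteq> x i}" using b by (simp add: restricted_product_def)
  have fin: "finite ?S" using f1 f2 by blast
  have out: "\<And>i. i \<notin> ?S \<Longrightarrow> a i = b i" by auto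
  show ?thesis using dd_sums[OF a b fin out] fin by (intro exI[of _ ?S]) simp
qed

lemma dd_term: assumes a: "a \<in> X" and b: "b \<in> X"
  shows "real (Suc i) * real (gd i (a i) (b i)) \<le> dd a b"
proof -
  obtain S where S: "finite S" "(\<lambda>i. real (Suc i) * real (gd i (a i) (b i))) sums (\<Sum>i\<in>S. real (Suc i) * real (gd i (a i) (b i)))"
    using dd_sums'[OF a b] by blast
  have sm: "summable (\<lambda>i. real (Suc i) * real (gd i (a i) (b i)))" using S by (auto simp: sums_iff)
  have "(\<Sum>i\<in>{i}. real (Suc i) * real (gd i (a i) (b i))) \<le> (\<Sum>i. real (Suc i) * real (gd i (a i) (b i)))"
    by (rule sum_le_suminf[OF sm]) auto
  then show ?thesis by (simp add: restricted_product_dist_def)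
qed

lemma dd_finite: assumes a: "a \<in> X" and b: "b \<in> X" and out: "\<And>i. N \<le> i \<Longrightarrow> a i = b i"
  shows "dd a b = (\<Sum>i<N. real (Suc i) * real (gd i (a i) (b i)))"
  using dd_sums[OF a b, of "{..<N}"] out unfolding restricted_product_dist_def
  by (simp add: sums_iff not_less)


end


lemma base_zero:
  fixes w :: "nat \<Rightarrow> int" and L :: nat
  shows "(\<forall>j<N. \<bar>w j\<bar> \<le> int L) \<Longrightarrow> (\<Sum>j<N. (2 * int L + 1) ^ j * w j) = 0 \<Longrightarrow> \<forall>j<N. w j = 0"
proof (induction N arbitrary: w)
  case 0 then show ?case by simp
next
  case (Suc N)
  define C where "C = 2 * int L + 1"
  have eq: "(\<Sum>j<Suc N. C ^ j * w j) = w 0 + C * (\<Sum>j<N. C ^ j * w (Suc j))"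
    apply (subst sum.lessThan_Suc_shift)
    apply (simp add: sum_distrib_left mult.assoc)
    done
  have s0: "(\<Sum>j<Suc N. C ^ j * w j) = 0" using Suc.prems(2) unfolding C_def .
  have "C dvd w 0"
  proof -
    have "w 0 = C * (- (\<Sum>j<N. C ^ j * w (Suc j)))" using s0 eq by simp
    then show ?thesis by (metis dvd_triv_left)
  qed
  moreover have "\<bar>w 0\<bar> \<le> int L" using Suc.prems(1) by blast
  ultimately have w0: "w 0 = 0"
    using dvd_imp_le_int[of "w 0" C] unfolding C_def by (cases "w 0 = 0") auto
  then have "(\<Sum>j<N. C ^ j * w (Suc j)) = 0" using s0 eq unfolding C_def by simp
  moreover have "\<forall>j<N. \<bar>w (Suc j)\<bar> \<le> int L" using Suc.prems(1) by simp
  ultimately have "\<forall>j<N. w (Suc j) = 0" using Suc.IH[of "\<lambda>j. w (Suc j)"] unfolding C_def by blast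
  then show ?case using w0 by (auto simp: less_Suc_eq_0_disj)
qed

lemma shear:
  fixes qb qc pb pc sb sc rb rc K g G A L :: int
  assumes "rb = qb * K + pb - sb" "rc = qc * K + pc - sc"
    "0 \<le> pb" "pb < g" "0 \<le> pc" "pc < g"
    "G \<le> \<bar>sb - sc\<bar>" "\<bar>sb - sc\<bar> \<le> A" "A + g + L + 1 \<le> K" "g + L \<le> G" "0 < K"
  shows "L + 1 \<le> \<bar>rb - rc\<bar>"
proof -
  have p: "\<bar>pb - pc\<bar> < g" using assms(3-6) by (simp add: abs_less_iff)
  have d: "rb - rc = (qb - qc) * K + (pb - pc) - (sb - sc)" using assms(1,2) by (simp add: algebra_simps)
  show ?thesis
  proof (cases "qb = qc")
    case True
    then have "rb - rc = (pb - pc) - (sb - sc)" using d by simp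
    moreover have "\<bar>sb - sc\<bar> - \<bar>pb - pc\<bar> \<le> \<bar>(pb - pc) - (sb - sc)\<bar>"
      using abs_triangle_ineq2[of "sb - sc" "pb - pc"] by (simp add: abs_minus_commute)
    ultimately show ?thesis using p assms(7,10) by linarith
  next
    case False
    then have "qb - qc \<ge> 1 \<or> qc - qb \<ge> 1" by linarith
    then have "(qb - qc) * K \<ge> 1 * K \<or> (qc - qb) * K \<ge> 1 * K"
      using assms(11) by (auto intro: mult_right_mono)
    then have k: "\<bar>(qb - qc) * K\<bar> \<ge> K" by (auto simp: algebra_simps)
    have "\<bar>(qb - qc) * K\<bar> - \<bar>(pb - pc) - (sb - sc)\<bar> \<le> \<bar>(qb - qc) * K + ((pb - pc) - (sb - sc))\<bar>"
      using abs_triangle_ineq2[of "(qb - qc) * K" "- ((pb - pc) - (sb - sc))"] by simp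
    moreover have "\<bar>(pb - pc) - (sb - sc)\<bar> \<le> \<bar>pb - pc\<bar> + \<bar>sb - sc\<bar>" by (rule abs_triangle_ineq4)
    ultimately show ?thesis using d k p assms(8,9) by (simp add: algebra_simps) linarith
  qed
qed

lemma qdiff:
  fixes y1 y2 K g :: nat
  assumes "y1 div K \<noteq> y2 div K" "(y1 mod K < g) = (y2 mod K < g)" "2 * g \<le> K"
  shows "int g + 1 \<le> \<bar>int y1 - int y2\<bar>"
proof -
  have K0: "0 < K" using assms(1) by (cases "K = 0") auto
  have main: "int g + 1 \<le> int y2 - int y1" if lt: "y1 div K < y2 div K"
    and h: "(y1 mod K < g) = (y2 mod K < g)" for y1 y2
  proof -
    have e1: "y1 = y1 div K * K + y1 mod K" and e2: "y2 = y2 div K * K + y2 mod K" by simp_all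
    have "(y1 div K + 1) * K \<le> y2 div K * K" using lt by (intro mult_le_mono1) simp
    then have a: "y1 div K * K + K \<le> y2 div K * K" by (simp add: algebra_simps)
    have b: "y1 mod K < K" "y2 mod K < K" using K0 by auto
    have "y1 + g + 1 \<le> y2"
    proof (cases "y1 mod K < g")
      case True
      then show ?thesis using a b e1 e2 assms(3) by linarith
    next
      case False
      then have "g \<le> y2 mod K" using h by simp
      then show ?thesis using a b e1 e2 False by linarith
    qed
    then show ?thesis by linarith
  qed
  show ?thesis
  proof (cases "y1 div K < y2 div K")
    case True then show ?thesis using main[OF True assms(2)] by simp
  next
    case False then have "y2 div K < y1 div K" using assms(1) by simp
    then show ?thesis using main[OF _ sym[OF assms(2)]] by simp
  qed
qed



locale cover_loc = prod_loc +
  fixes R :: "nat \<Rightarrow> real"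
  assumes Rpos: "\<And>i. R i > 0" and Rmono: "mono R"
begin

definition "m = nat \<lfloor>R 0\<rfloor>"
definition "n = set_encode {..<m}"
definition "L = nat \<lceil>R n\<rceil>"
definition "g = L + 1"
definition "G = 2 * L + 2"
definition "C = 2 * L + 1"
definition "A = G * L * (\<Sum>j<L - m. C ^ j)"
definition "K = A + g + L + 1"
definition "s a = (\<Sum>j<L - m. G * C ^ j * rr (m + j) (a (m + j)))"
definition "yt k a = rr k (a k) + s a"
definition "J a = {k. k < m \<and> yt k a mod K < g}"
definition "kk i = L div (2 * Suc i)"
definition "lam i a = (if i < m then yt i a div K * K - s a else rr i (a i))"
definition "ell i a = lam i a - kk i"
definition "key a = (J a, (\<lambda>i. if i < m then yt i a div K else 0),
   (\<lambda>i. if m \<le> i then rr i (a i) else 0), (\<lambda>i. an i (a i) (ell i a)))"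
definition "cls a = {b \<in> X. key b = key a}"
definition "U t = {cls a | a. a \<in> X \<and> set_encode (J a) = t}"

lemma m_R0: "real m \<le> R 0" "R 0 < real m + 1"
  using Rpos[of 0] unfolding m_def by linarith+

lemma R_le: "t \<le> n \<Longrightarrow> R t \<le> R n" using Rmono by (simp add: mono_def)

lemma L_R: "R n \<le> real L" unfolding L_def by linarith

lemma m_le_L: "m \<le> L"
proof -
  have "R 0 \<le> R n" using R_le by simp
  then have "real m \<le> real L" using m_R0 L_R by linarith
  then show ?thesis by simp
qed

lemma K_pos: "0 < K" by (simp add: K_def)
lemma gK: "2 * g \<le> K" by (simp add: K_def g_def)
lemma kk_le: "kk i \<le> L" by (simp add: kk_def)
lemma div_big: "0 < (q::nat) \<Longrightarrow> N < (N div q + 1) * q"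
proof -
  assume q: "0 < q"
  have "N = N div q * q + N mod q" by simp
  moreover have "N mod q < q" using q by simp
  moreover have "(N div q + 1) * q = N div q * q + q" by (simp add: algebra_simps)
  ultimately show ?thesis by linarith
qed

lemma kk_big: "L < (kk i + 1) * (2 * Suc i)"
  unfolding kk_def by (rule div_big) simp
lemma kk_0: "L \<le> i \<Longrightarrow> kk i = 0" by (simp add: kk_def)

lemma key_eq:
  assumes "key b = key c"
  shows "J b = J c" "\<And>i. i < m \<Longrightarrow> yt i b div K = yt i c div K"
    "\<And>i. m \<le> i \<Longrightarrow> rr i (b i) = rr i (c i)" "\<And>i. an i (b i) (ell i b) = an i (c i) (ell i c)"
proof -
  have h: "J b = J c" "(\<lambda>i. if i < m then yt i b div K else 0) = (\<lambda>i. if i < m then yt i c div K else 0)"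
    "(\<lambda>i. if m \<le> i then rr i (b i) else 0) = (\<lambda>i. if m \<le> i then rr i (c i) else 0)"
    "(\<lambda>i. an i (b i) (ell i b)) = (\<lambda>i. an i (c i) (ell i c))"
    using assms unfolding key_def by auto
  show "J b = J c" by (rule h(1))
  show "\<And>i. i < m \<Longrightarrow> yt i b div K = yt i c div K" using fun_cong[OF h(2)] by metis
  show "\<And>i. m \<le> i \<Longrightarrow> rr i (b i) = rr i (c i)" using fun_cong[OF h(3)] by metis
  show "\<And>i. an i (b i) (ell i b) = an i (c i) (ell i c)" using fun_cong[OF h(4)] by metis
qed

lemma s_eq: assumes "\<And>i. m \<le> i \<Longrightarrow> rr i (b i) = rr i (c i)" shows "s b = s c"
  unfolding s_def using assms by (intro sum.cong) auto

lemma lam_eq: assumes "key b = key c" shows "lam i b = lam i c" "ell i b = ell i c"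
proof -
  have se: "s b = s c" using s_eq key_eq(3)[OF assms] by blast
  show "lam i b = lam i c"
    using key_eq(2,3)[OF assms] se unfolding lam_def by (cases "i < m") auto
  then show "ell i b = ell i c" by (simp add: ell_def)
qed

lemma lam_le: "lam i a \<le> rr i (a i)"
proof (cases "i < m")
  case True
  have "yt i a div K * K \<le> yt i a" by simp
  moreover have "lam i a = yt i a div K * K - s a" using True by (simp add: lam_def)
  ultimately show ?thesis unfolding yt_def by arith
next
  case False then show ?thesis by (simp add: lam_def)
qed

lemma lam_ge: "rr i (a i) \<le> lam i a + K"
proof (cases "i < m")
  case True
  have "yt i a = yt i a div K * K + yt i a mod K" by simp
  moreover have "yt i a mod K < K" using K_pos by simp
  moreover have "lam i a = yt i a div K * K - s a" using True by (simp add: lam_def)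
  ultimately show ?thesis unfolding yt_def by arith
next
  case False then show ?thesis by (simp add: lam_def)
qed

lemma ell_le: "ell i a \<le> rr i (a i)" using lam_le[of i a] by (simp add: ell_def)

lemma coord_bound: assumes b: "b \<in> X" and c: "c \<in> X" and k: "key b = key c"
  shows "gd i (b i) (c i) \<le> 2 * K + 2 * L"
proof -
  interpret T: tree_loc "V i" "E i" "x i" by (rule TL)
  have bi: "b i \<in> V i" and ci: "c i \<in> V i" using b c X_in by auto
  have lc: "ell i c = ell i b" using lam_eq[OF k] by simp
  have eq: "an i (b i) (ell i b) = an i (c i) (ell i b)" using key_eq(4)[OF k] lc by simp
  have f1: "gd i (b i) (c i) + 2 * ell i b \<le> rr i (b i) + rr i (c i)"
    using T.anc_same[OF bi ci ell_le ell_le[of i c, unfolded lc] eq] .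
  have f2: "rr i (b i) \<le> lam i b + K" "rr i (c i) \<le> lam i b + K"
    using lam_ge[of i b] lam_ge[of i c] lam_eq[OF k] by auto
  note f3 = kk_le[of i]
  show ?thesis
  proof (cases "kk i \<le> lam i b")
    case True
    then have "ell i b + kk i = lam i b" by (simp add: ell_def)
    then show ?thesis using f1 f2 f3 by linarith
  next
    case False
    then have "ell i b = 0" by (simp add: ell_def)
    then show ?thesis using f1 f2 f3 False by linarith
  qed
qed

lemma coord_eq_big: assumes b: "b \<in> X" and c: "c \<in> X" and k: "key b = key c" and i: "L \<le> i"
  shows "b i = c i"
proof -
  interpret T: tree_loc "V i" "E i" "x i" by (rule TL)
  have mi: "m \<le> i" using i m_le_L by simp
  have eb: "ell i b = rr i (b i)" and ec: "ell i c = rr i (c i)"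
    using kk_0[OF i] mi by (auto simp: ell_def lam_def)
  have e1: "an i (b i) (ell i b) = b i" unfolding eb by (rule T.anc_self)
  have e2: "an i (c i) (ell i c) = c i" unfolding ec by (rule T.anc_self)
  show ?thesis using key_eq(4)[OF k, of i] e1 e2 by simp
qed

definition "Mb = (\<Sum>i<L. real (Suc i) * real (2 * K + 2 * L))"

lemma bounded: assumes b: "b \<in> X" and c: "c \<in> X" and k: "key b = key c"
  shows "dd b c \<le> Mb"
proof -
  have "dd b c = (\<Sum>i<L. real (Suc i) * real (gd i (b i) (c i)))"
    by (rule dd_finite[OF b c]) (rule coord_eq_big[OF b c k])
  also have "\<dots> \<le> Mb" unfolding Mb_def
    using coord_bound[OF b c k] by (intro sum_mono mult_left_mono) (auto simp only: of_nat_le_iff of_nat_0_le_iff)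
  finally show ?thesis .
qed

lemma rr_diff: assumes b: "b \<in> X" and c: "c \<in> X"
  shows "\<bar>int (rr i (b i)) - int (rr i (c i))\<bar> \<le> int (gd i (b i) (c i))"
proof -
  interpret T: tree_loc "V i" "E i" "x i" by (rule TL)
  have bi: "b i \<in> V i" and ci: "c i \<in> V i" using b c X_in by auto
  show ?thesis using T.r_lip[OF bi ci] by linarith
qed

lemma sepBig: assumes b: "b \<in> X" and c: "c \<in> X" and g: "L + 1 \<le> gd i (b i) (c i)"
  shows "real L + 1 \<le> dd b c"
proof -
  have "real L + 1 \<le> real (gd i (b i) (c i))" using g by linarith
  also have "\<dots> \<le> real (Suc i) * real (gd i (b i) (c i))"
    using mult_right_mono[of 1 "real (Suc i)" "real (gd i (b i) (c i))"] by simp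
  also have "\<dots> \<le> dd b c" by (rule dd_term[OF b c])
  finally show ?thesis .
qed

lemma sepIdx: assumes b: "b \<in> X" and c: "c \<in> X" and ne: "b i \<noteq> c i"
  shows "real (Suc i) \<le> dd b c"
proof -
  interpret T: tree_loc "V i" "E i" "x i" by (rule TL)
  have bi: "b i \<in> V i" and ci: "c i \<in> V i" using b c X_in by auto
  have "gd i (b i) (c i) \<noteq> 0" using T.dist_0[OF bi ci] ne by auto
  then have "real (Suc i) * 1 \<le> real (Suc i) * real (gd i (b i) (c i))"
    by (intro mult_left_mono) auto
  also have "\<dots> \<le> dd b c" by (rule dd_term[OF b c])
  finally show ?thesis by simp
qed

lemma sepQ: assumes b: "b \<in> X" and c: "c \<in> X" and Jeq: "J b = J c" and se: "s b = s c"
  and k: "k < m" and q: "yt k b div K \<noteq> yt k c div K"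
  shows "real L + 1 \<le> dd b c"
proof -
  have "(yt k b mod K < g) = (yt k c mod K < g)"
    using Jeq k unfolding J_def by blast
  from qdiff[OF q this gK] have "int g + 1 \<le> \<bar>int (yt k b) - int (yt k c)\<bar>" .
  also have "int (yt k b) - int (yt k c) = int (rr k (b k)) - int (rr k (c k))"
    using se by (simp add: yt_def)
  also note rr_diff[OF b c, of k]
  finally have "L + 1 \<le> gd k (b k) (c k)" by (simp add: g_def)
  then show ?thesis by (rule sepBig[OF b c])
qed

lemma sepAnc: assumes b: "b \<in> X" and c: "c \<in> X" and le: "lam i b = lam i c"
  and ne: "an i (b i) (ell i b) \<noteq> an i (c i) (ell i c)"
  shows "real L + 1 \<le> dd b c"
proof -
  interpret T: tree_loc "V i" "E i" "x i" by (rule TL)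
  have bi: "b i \<in> V i" and ci: "c i \<in> V i" using b c X_in by auto
  have lc: "ell i c = ell i b" using le by (simp add: ell_def)
  have l0: "ell i b \<noteq> 0"
  proof
    assume "ell i b = 0"
    then show False using ne lc T.anc_0[OF bi] T.anc_0[OF ci] by simp
  qed
  then have lk: "ell i b + kk i = lam i b" by (simp add: ell_def)
  have "rr i (b i) + rr i (c i) + 2 \<le> gd i (b i) (c i) + 2 * ell i b"
    using T.anc_sep[OF bi ci ell_le ell_le[of i c, unfolded lc]] ne lc by simp
  moreover have "lam i b \<le> rr i (b i)" "lam i b \<le> rr i (c i)" using lam_le[of i b] lam_le[of i c] le by auto
  ultimately have "2 * kk i + 2 \<le> gd i (b i) (c i)" using lk by linarith
  then have "(kk i + 1) * (2 * Suc i) \<le> Suc i * gd i (b i) (c i)"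
    using mult_le_mono2[of "2 * kk i + 2" "gd i (b i) (c i)" "Suc i"] by (simp add: algebra_simps)
  then have "L + 1 \<le> Suc i * gd i (b i) (c i)" using kk_big[of i] by linarith
  then have "real L + 1 \<le> real (Suc i * gd i (b i) (c i))" by linarith
  also have "\<dots> \<le> dd b c" using dd_term[OF b c, of i] by (simp only: of_nat_mult)
  finally show ?thesis .
qed

lemma int_decomp: "int (rr k (a k)) = int (yt k a div K) * int K + int (yt k a mod K) - int (s a)"
proof -
  have e1: "int (yt k a) = int (yt k a div K) * int K + int (yt k a mod K)"
    by (simp only: of_nat_add[symmetric] of_nat_mult[symmetric] div_mult_mod_eq)
  have e2: "int (yt k a) = int (rr k (a k)) + int (s a)" by (simp add: yt_def)
  from e1 e2 show ?thesis by linarith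
qed

lemma sepShear: assumes b: "b \<in> X" and c: "c \<in> X" and Jeq: "J b = J c" and Jne: "J b \<noteq> {}"
  and small: "\<And>i. m \<le> i \<Longrightarrow> rr i (b i) \<noteq> rr i (c i) \<Longrightarrow> i < L \<and> \<bar>int (rr i (b i)) - int (rr i (c i))\<bar> \<le> int L"
  and ex: "\<exists>i\<ge>m. rr i (b i) \<noteq> rr i (c i)"
  shows "real L + 1 \<le> dd b c"
proof -
  define w where "w j = int (rr (m+j) (b (m+j))) - int (rr (m+j) (c (m+j)))" for j
  have wb: "\<forall>j<L-m. \<bar>w j\<bar> \<le> int L"
  proof (intro allI impI)
    fix j assume "j < L - m"
    show "\<bar>w j\<bar> \<le> int L"
    proof (cases "rr (m+j) (b (m+j)) = rr (m+j) (c (m+j))")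
      case True then show ?thesis by (simp add: w_def)
    next
      case False then show ?thesis using small[of "m+j"] by (simp add: w_def)
    qed
  qed
  obtain i0 where i0: "m \<le> i0" "rr i0 (b i0) \<noteq> rr i0 (c i0)" using ex by blast
  have "i0 < L" using small[OF i0] by simp
  then have j0: "i0 - m < L - m" "w (i0 - m) \<noteq> 0" using i0 by (auto simp: w_def)
  have Cint: "int C = 2 * int L + 1" by (simp add: C_def)
  define S where "S = (\<Sum>j<L-m. int C ^ j * w j)"
  have S0: "S \<noteq> 0"
  proof
    assume "S = 0"
    then have "(\<Sum>j<L-m. (2 * int L + 1) ^ j * w j) = 0" by (simp add: S_def Cint)
    from base_zero[OF wb this] j0 show False by blast
  qed
  have ds: "int (s b) - int (s c) = int G * S"
    unfolding s_def S_def w_def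
    by (simp add: of_nat_sum sum_subtractf[symmetric] sum_distrib_left right_diff_distrib mult.assoc)
  have Sabs: "\<bar>S\<bar> \<le> int L * (\<Sum>j<L-m. int C ^ j)"
  proof -
    have "\<bar>S\<bar> \<le> (\<Sum>j<L-m. \<bar>int C ^ j * w j\<bar>)" unfolding S_def by (rule sum_abs)
    also have "\<dots> \<le> (\<Sum>j<L-m. int C ^ j * int L)"
    proof (rule sum_mono)
      fix j assume "j \<in> {..<L-m}"
      then have "\<bar>w j\<bar> \<le> int L" using wb by simp
      then show "\<bar>int C ^ j * w j\<bar> \<le> int C ^ j * int L" by (simp add: abs_mult mult_left_mono)
    qed
    finally show ?thesis by (simp add: sum_distrib_left mult.commute)
  qed
  have Aint: "int A = int G * (int L * (\<Sum>j<L-m. int C ^ j))" by (simp add: A_def of_nat_sum)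
  have dlo: "int G \<le> \<bar>int (s b) - int (s c)\<bar>"
  proof -
    have "1 \<le> \<bar>S\<bar>" using S0 by linarith
    then have "int G * 1 \<le> int G * \<bar>S\<bar>" by (intro mult_left_mono) auto
    then show ?thesis using ds by (simp add: abs_mult)
  qed
  have dhi: "\<bar>int (s b) - int (s c)\<bar> \<le> int A"
    using ds Sabs Aint by (simp add: abs_mult mult_left_mono)
  obtain k where k: "k \<in> J b" using Jne by blast
  have km: "k < m" "yt k b mod K < g" "yt k c mod K < g" using k Jeq unfolding J_def by auto
  have "int L + 1 \<le> \<bar>int (rr k (b k)) - int (rr k (c k))\<bar>"
  proof (rule shear[OF int_decomp int_decomp])
    show "0 \<le> int (yt k b mod K)" "0 \<le> int (yt k c mod K)" by simp_all
    show "int (yt k b mod K) < int g" "int (yt k c mod K) < int g" using km by simp_all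
    show "int G \<le> \<bar>int (s b) - int (s c)\<bar>" by (rule dlo)
    show "\<bar>int (s b) - int (s c)\<bar> \<le> int A" by (rule dhi)
    show "int A + int g + int L + 1 \<le> int K" by (simp add: K_def)
    show "int g + int L \<le> int G" by (simp add: g_def G_def)
    show "0 < int K" using K_pos by simp
  qed
  also note rr_diff[OF b c, of k]
  finally have "L + 1 \<le> gd k (b k) (c k)" by simp
  then show ?thesis by (rule sepBig[OF b c])
qed

lemma sep: assumes b: "b \<in> X" and c: "c \<in> X" and Jeq: "J b = J c" and kne: "key b \<noteq> key c"
  shows "real m + 1 \<le> dd b c \<and> (J b \<noteq> {} \<longrightarrow> real L + 1 \<le> dd b c)"
proof (cases "\<exists>i\<ge>m. rr i (b i) \<noteq> rr i (c i)")
  case True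
  then obtain i where i: "m \<le> i" "rr i (b i) \<noteq> rr i (c i)" by blast
  have "b i \<noteq> c i" using i by auto
  then have "real (Suc i) \<le> dd b c" by (rule sepIdx[OF b c])
  then have p1: "real m + 1 \<le> dd b c" using i by linarith
  have p2: "real L + 1 \<le> dd b c" if Jne: "J b \<noteq> {}"
  proof (cases "\<exists>i\<ge>m. rr i (b i) \<noteq> rr i (c i) \<and> \<not> (i < L \<and> \<bar>int (rr i (b i)) - int (rr i (c i))\<bar> \<le> int L)")
    case True
    then obtain i where i: "m \<le> i" "rr i (b i) \<noteq> rr i (c i)"
      "\<not> (i < L \<and> \<bar>int (rr i (b i)) - int (rr i (c i))\<bar> \<le> int L)" by blast
    show ?thesis
    proof (cases "L \<le> i")
      case True
      have "b i \<noteq> c i" using i by auto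
      then have "real (Suc i) \<le> dd b c" by (rule sepIdx[OF b c])
      then show ?thesis using True by linarith
    next
      case False
      then have "int L < \<bar>int (rr i (b i)) - int (rr i (c i))\<bar>" using i by simp
      then have "L + 1 \<le> gd i (b i) (c i)" using rr_diff[OF b c, of i] by linarith
      then show ?thesis by (rule sepBig[OF b c])
    qed
  next
    case False
    show ?thesis
      by (rule sepShear[OF b c Jeq Jne]) (use False True in auto)
  qed
  show ?thesis using p1 p2 by blast
next
  case False
  then have teq: "\<And>i. m \<le> i \<Longrightarrow> rr i (b i) = rr i (c i)" by blast
  have se: "s b = s c" using s_eq teq by blast
  have Zeq: "(\<lambda>i. if m \<le> i then rr i (b i) else 0) = (\<lambda>i. if m \<le> i then rr i (c i) else 0)"
    using teq by auto
  have main: "real L + 1 \<le> dd b c"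
  proof (cases "\<exists>k<m. yt k b div K \<noteq> yt k c div K")
    case True
    then obtain k where "k < m" "yt k b div K \<noteq> yt k c div K" by blast
    then show ?thesis using sepQ[OF b c Jeq se] by blast
  next
    case False
    then have Qeq: "(\<lambda>i. if i < m then yt i b div K else 0) = (\<lambda>i. if i < m then yt i c div K else 0)"
      by auto
    have "\<exists>i. an i (b i) (ell i b) \<noteq> an i (c i) (ell i c)"
    proof (rule ccontr)
      assume "\<not> ?thesis"
      then have "(\<lambda>i. an i (b i) (ell i b)) = (\<lambda>i. an i (c i) (ell i c))" by auto
      then have "key b = key c" unfolding key_def using Jeq Qeq Zeq by simp
      then show False using kne by simp
    qed
    then obtain i where i: "an i (b i) (ell i b) \<noteq> an i (c i) (ell i c)" by blast
    have "lam i b = lam i c"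
      using False teq se unfolding lam_def by (cases "i < m") auto
    then show ?thesis using sepAnc[OF b c _ i] by blast
  qed
  then show ?thesis using m_le_L by auto
qed

lemma J_sub: "J a \<subseteq> {..<m}" by (auto simp: J_def)
lemma J_fin: "finite (J a)" using J_sub finite_subset by blast

lemma cls_key: "b \<in> cls a \<Longrightarrow> key b = key a" by (simp add: cls_def)

lemma U_props: assumes t: "t \<le> n"
  shows "(\<forall>A\<in>U t. A \<noteq> {} \<and> A \<subseteq> X) \<and> uniformly_bounded dd (U t) \<and> R_disjoint dd (R t) (U t)"
proof (intro conjI)
  show "\<forall>A\<in>U t. A \<noteq> {} \<and> A \<subseteq> X" by (auto simp: U_def cls_def)
  show "uniformly_bounded dd (U t)" unfolding uniformly_bounded_def
  proof (intro exI[of _ Mb] ballI)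
    fix A b c assume A: "A \<in> U t" and bc: "b \<in> A" "c \<in> A"
    then obtain a where a: "A = cls a" by (auto simp: U_def)
    have "b \<in> X" "c \<in> X" using bc a by (auto simp: cls_def)
    moreover have "key b = key c" using bc a cls_key by auto
    ultimately show "dd b c \<le> Mb" by (rule bounded)
  qed
  show "R_disjoint dd (R t) (U t)" unfolding R_disjoint_def
  proof (intro ballI impI)
    fix A B assume AB: "A \<in> U t" "B \<in> U t" "A \<noteq> B"
    obtain a where a: "A = cls a" "a \<in> X" "set_encode (J a) = t" using AB by (auto simp: U_def)
    obtain a' where a': "B = cls a'" "a' \<in> X" "set_encode (J a') = t" using AB by (auto simp: U_def)
    have Jaa: "J a = J a'" using a(3) a'(3) set_encode_eq[OF J_fin[of a] J_fin[of a']] by simp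
    have kaa: "key a \<noteq> key a'" using AB a a' by (auto simp: cls_def)
    define LB where "LB = (if t = 0 then real m + 1 else real L + 1)"
    have LBR: "R t < LB"
    proof (cases "t = 0")
      case True then show ?thesis using m_R0 by (simp add: LB_def)
    next
      case False then show ?thesis using R_le[OF t] L_R by (simp add: LB_def)
    qed
    have lb: "LB \<le> dd (fst p) (snd p)" if p: "p \<in> A \<times> B" for p
    proof -
      obtain b c where bc: "p = (b, c)" "b \<in> A" "c \<in> B" using p by auto
      have X: "b \<in> X" "c \<in> X" using bc a a' by (auto simp: cls_def)
      have kb: "key b = key a" "key c = key a'" using bc a a' cls_key by auto
      have Jb: "J b = J a" "J c = J a'" using key_eq(1)[OF kb(1)] key_eq(1)[OF kb(2)] by auto
      have S: "real m + 1 \<le> dd b c \<and> (J b \<noteq> {} \<longrightarrow> real L + 1 \<le> dd b c)"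
        using sep[OF X] Jb Jaa kb kaa by simp
      show ?thesis
      proof (cases "t = 0")
        case True then show ?thesis using S bc by (simp add: LB_def)
      next
        case False
        then have "J b \<noteq> {}" using Jb a by auto
        then show ?thesis using S bc False by (simp add: LB_def)
      qed
    qed
    have ne: "A \<times> B \<noteq> {}" using a a' by (auto simp: cls_def)
    have "LB \<le> set_distance dd A B" unfolding set_distance_def
      by (rule cINF_greatest[OF ne lb])
    then show "set_distance dd A B > R t" using LBR by linarith
  qed
qed

lemma cover: "X \<subseteq> (\<Union>t\<le>n. \<Union>(U t))"
proof
  fix a assume a: "a \<in> X"
  have "a \<in> cls a" using a by (simp add: cls_def)
  moreover have "cls a \<in> U (set_encode (J a))" using a by (auto simp: U_def)
  moreover have "set_encode (J a) \<le> n"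
    unfolding n_def set_encode_def by (rule sum_mono2) (use J_sub in auto)
  ultimately show "a \<in> (\<Union>t\<le>n. \<Union>(U t))" by blast
qed

end


theorem theorem3p3:
  fixes V :: "nat \<Rightarrow> 'a set" and E :: "nat \<Rightarrow> 'a \<Rightarrow> 'a \<Rightarrow> bool" and x :: "nat \<Rightarrow> 'a"
  assumes "\<And>i. is_tree (V i) (E i)"
    and "\<And>i. x i \<in> V i"
  shows "asymptotic_property_C (restricted_product V x) (restricted_product_dist V E)"
proof -
  have P: "prod_loc V E x" using assms by (simp add: prod_loc_def)
  show ?thesis unfolding asymptotic_property_C_def
  proof (intro allI impI)
    fix R :: "nat \<Rightarrow> real" assume h: "(\<forall>i. R i > 0) \<and> mono R"
    interpret cover_loc V E x R using P h by (simp add: cover_loc_def cover_loc_axioms_def)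
    show "\<exists>n \<U>. (\<forall>i\<le>n. (\<forall>A\<in>\<U> i. A \<noteq> {} \<and> A \<subseteq> restricted_product V x)
                      \<and> uniformly_bounded (restricted_product_dist V E) (\<U> i)
                      \<and> R_disjoint (restricted_product_dist V E) (R i) (\<U> i))
              \<and> restricted_product V x \<subseteq> (\<Union>i\<le>n. \<Union>(\<U> i))"
      by (intro exI[of _ n] exI[of _ U]) (use U_props cover in blast)
  qed
qed

end
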